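(* Let $N$ be a subset of $\mathbb N$ and let $\mathscr W_N=\{\mathbf w_m\mid m\in N\}$. If $n\in\mathbb N$ and $n\notin N$, then the monoid $M(\mathscr W_N)$ satisfies the identity $\mathbf w_n\approx x^2(\mathbf w_n)_x$.
   Context: Let $\mathscr X$ be a countably infinite alphabet and $\mathscr X^\ast$ the free monoid over it (words). For each $m\in\mathbb N$, \[ \mathbf w_m=\biggl(\prod_{i=1}^m z_it_i\biggr)\,x\,\biggl(\prod_{i=1}^m z_iy_i^{(m)}\biggr)\,x\,\biggl(\prod_{j=1}^m\biggl(\prod_{i=1}^m y_i^{(m-j)}y_i^{(m+1-j)}\biggr)\biggr), \] where $x$, $z_i$, $t_i$, $y_i^{(k)}$ are pairwise distinct letters of $\mathscr X$ (the same letter names are used for all $m$) and products are taken in increasing order of the index. For a word $\mathbf w$ and a letter $x$, $\mathbf w_x$ denotes the word obtained from $\mathbf w$ by deleting all occurrences of $x$. For a set $\mathscr W$ of words, $M(\mathscr W)$ is the Rees quotient of $\mathscr X^\ast$ modulo the ideal of all words that are not subwords of any word in $\mathscr W$ (its elements are the subwords of words in $\mathscr W$, including the empty word, and a zero $0$). A monoid $S$ satisfies an identity $\mathbf u\approx\mathbf v$ (with $\mathbf u,\mathbf v\in\mathscr X^\ast$) if $\varphi(\mathbf u)=\varphi(\mathbf v)$ for every substitution (monoid homomorphism) $\varphi\colon\mathscr X^\ast\to S$. *)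

theory Defs
  imports Main
begin

text \<open>The countably infinite alphabet: the named letters x, z_i, t_i, y_i^(k)
  together with infinitely many further letters.\<close>
datatype letter = LX | LZ nat | LT nat | LY nat nat | LOther nat

type_synonym word = "letter list"

text \<open>The word w_m (indices i, j run over 1..m; LY i k stands for y_i^(k)).\<close>
definition wm :: "nat \<Rightarrow> word" where
  "wm m =
     concat (map (\<lambda>i. [LZ i, LT i]) [1..<m+1]) @ [LX] @
     concat (map (\<lambda>i. [LZ i, LY i m]) [1..<m+1]) @ [LX] @
     concat (map (\<lambda>j. concat (map (\<lambda>i. [LY i (m - j), LY i (m + 1 - j)]) [1..<m+1])) [1..<m+1])"

definition del :: "letter \<Rightarrow> word \<Rightarrow> word" where
  "del a u = filter (\<lambda>b. b \<noteq> a) u"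

definition is_subword :: "word set \<Rightarrow> word \<Rightarrow> bool" where
  "is_subword W u = (\<exists>w\<in>W. \<exists>p s. w = p @ u @ s)"

text \<open>The Rees quotient M(W): elements Some u (u a subword) and the zero None.\<close>
definition rees_carrier :: "word set \<Rightarrow> word option set" where
  "rees_carrier W = insert None (Some ` {u. is_subword W u})"

fun rees_mult :: "word set \<Rightarrow> word option \<Rightarrow> word option \<Rightarrow> word option" where
  "rees_mult W (Some a) (Some b) = (if is_subword W (a @ b) then Some (a @ b) else None)"
| "rees_mult W _ _ = None"

fun rees_eval :: "word set \<Rightarrow> (letter \<Rightarrow> word option) \<Rightarrow> word \<Rightarrow> word option" where
  "rees_eval W \<sigma> [] = Some []"
| "rees_eval W \<sigma> (a # u) = rees_mult W (\<sigma> a) (rees_eval W \<sigma> u)"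

definition satisfies :: "word set \<Rightarrow> word \<Rightarrow> word \<Rightarrow> bool" where
  "satisfies W u v = (\<forall>\<sigma>. (\<forall>a. \<sigma> a \<in> rees_carrier W) \<longrightarrow> rees_eval W \<sigma> u = rees_eval W \<sigma> v)"

definition WN :: "nat set \<Rightarrow> word set" where
  "WN N = wm ` N"

end

theory Submission
  imports Defs
begin


lemma concat_len:
  assumes "\<And>j. length (F j) = c"
  shows "length (concat (map F [a..<a+m])) = m*c"
  using assms by (induction m) auto

lemma concat_nth:
  assumes "\<And>j. length (F j) = c" "k < m" "r < c"
  shows "concat (map F [a..<a+m]) ! (k*c + r) = F (a+k) ! r"
  using assms(2)
proof (induction m)
  case 0 then show ?case by simp
next
  case (Suc m)
  have e: "concat (map F [a..<a+Suc m]) = concat (map F [a..<a+m]) @ F (a+m)" by simp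
  show ?case
  proof (cases "k < m")
    case True
    have "k*c + r < m*c"
    proof -
      have "k*c + r < k*c + c" using assms(3) by simp
      also have "\<dots> = Suc k * c" by simp
      also have "\<dots> \<le> m*c" using True by (intro mult_le_mono1) simp
      finally show ?thesis .
    qed
    then show ?thesis using Suc True unfolding e by (simp add: nth_append concat_len[OF assms(1)])
  next
    case False
    then have "k = m" using Suc by simp
    then show ?thesis unfolding e by (simp add: nth_append concat_len[OF assms(1)])
  qed
qed

lemma wm_split: "wm m = concat (map (\<lambda>i. [LZ i, LT i]) [1..<1+m]) @ [LX] @
     concat (map (\<lambda>i. [LZ i, LY i m]) [1..<1+m]) @ [LX] @
     concat (map (\<lambda>j. concat (map (\<lambda>i. [LY i (m - j), LY i (m + 1 - j)]) [1..<1+m])) [1..<1+m])"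
  unfolding wm_def by (simp add: add.commute)

lemma len_wm: "length (wm m) = 2*m*m + 4*m + 2"
proof -
  have 1: "length (concat (map (\<lambda>i. [LZ i, LT i]) [1..<1+m])) = m*2"
    by (rule concat_len) simp
  have 2: "length (concat (map (\<lambda>i. [LZ i, LY i m]) [1..<1+m])) = m*2"
    by (rule concat_len) simp
  have 3: "length (concat (map (\<lambda>j. concat (map (\<lambda>i. [LY i (m - j), LY i (m + 1 - j)]) [1..<1+m])) [1..<1+m])) = m*(m*2)"
    by (rule concat_len) (rule concat_len, simp)
  show ?thesis unfolding wm_split using 1 2 3 by simp
qed

lemma gen_nth:
  assumes "xs = A @ [LX] @ B @ [LX] @ C" "length A = m*2" "length B = m*2"
  shows "p < m*2 \<Longrightarrow> xs!p = A!p" "xs!(m*2) = LX" "p < m*2 \<Longrightarrow> xs!(m*2+1+p) = B!p"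
    "xs!(m*2+1+m*2) = LX" "xs!(m*2+1+m*2+1+p) = C!p"
  using assms by (auto simp: nth_append)

lemma wm_nth:
  shows "i < m \<Longrightarrow> wm m ! (2*i) = LZ (i+1)"
    and "i < m \<Longrightarrow> wm m ! (2*i+1) = LT (i+1)"
    and "wm m ! (2*m) = LX"
    and "i < m \<Longrightarrow> wm m ! (2*m+1+2*i) = LZ (i+1)"
    and "i < m \<Longrightarrow> wm m ! (2*m+2+2*i) = LY (i+1) m"
    and "wm m ! (4*m+1) = LX"
    and "j < m \<Longrightarrow> i < m \<Longrightarrow> wm m ! (4*m+2+j*(2*m)+2*i) = LY (i+1) (m-(j+1))"
    and "j < m \<Longrightarrow> i < m \<Longrightarrow> wm m ! (4*m+3+j*(2*m)+2*i) = LY (i+1) (m-j)"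
proof -
  define A where "A = concat (map (\<lambda>i. [LZ i, LT i]) [1..<1+m])"
  define B where "B = concat (map (\<lambda>i. [LZ i, LY i m]) [1..<1+m])"
  define C where "C = concat (map (\<lambda>j. concat (map (\<lambda>i. [LY i (m - j), LY i (m + 1 - j)]) [1..<1+m])) [1..<1+m])"
  have 1: "length A = m*2" unfolding A_def by (rule concat_len) simp
  have 2: "length B = m*2" unfolding B_def by (rule concat_len) simp
  have w: "wm m = A @ [LX] @ B @ [LX] @ C" unfolding A_def B_def C_def by (rule wm_split)
  note g = gen_nth[OF w 1 2]
  have Ai: "i < m \<Longrightarrow> A ! (i*2+r) = [LZ (1+i), LT (1+i)] ! r" if "r < 2" for i r
    unfolding A_def by (rule concat_nth) (use that in auto)
  have Bi: "i < m \<Longrightarrow> B ! (i*2+r) = [LZ (1+i), LY (1+i) m] ! r" if "r < 2" for i r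
    unfolding B_def by (rule concat_nth) (use that in auto)
  have Ci: "j < m \<Longrightarrow> i < m \<Longrightarrow> C ! (j*(m*2) + (i*2+r)) = [LY (1+i) (m - (1+j)), LY (1+i) (m + 1 - (1+j))] ! r" if "r < 2" for i j r
  proof -
    assume a: "j < m" "i < m"
    have "C ! (j*(m*2) + (i*2+r)) = concat (map (\<lambda>i. [LY i (m - (1+j)), LY i (m + 1 - (1+j))]) [1..<1+m]) ! (i*2+r)"
      unfolding C_def
    proof (rule concat_nth)
      show "i*2+r < m*2" using a that by linarith
      show "\<And>j. length (concat (map (\<lambda>i. [LY i (m - j), LY i (m + 1 - j)]) [1..<1+m])) = m*2"
        by (rule concat_len) simp
    qed (use a in simp_all)
    also have "\<dots> = [LY (1+i) (m - (1+j)), LY (1+i) (m + 1 - (1+j))] ! r"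
      by (rule concat_nth) (use a that in auto)
    finally show ?thesis .
  qed
  show "i < m \<Longrightarrow> wm m ! (2*i) = LZ (i+1)"
    using Ai[of 0 i] g(1)[of "2*i"] by (simp add: mult.commute)
  show "i < m \<Longrightarrow> wm m ! (2*i+1) = LT (i+1)"
    using Ai[of 1 i] g(1)[of "2*i+1"] by (simp add: mult.commute)
  show "wm m ! (2*m) = LX"
    using g(2) by (simp add: mult.commute)
  show "i < m \<Longrightarrow> wm m ! (2*m+1+2*i) = LZ (i+1)"
    using Bi[of 0 i] g(3)[of "2*i"] by (simp add: mult.commute)
  show "i < m \<Longrightarrow> wm m ! (2*m+2+2*i) = LY (i+1) m"
    using Bi[of 1 i] g(3)[of "2*i+1"] by (simp add: mult.commute)
  show "wm m ! (4*m+1) = LX"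
    using g(4) by (simp add: mult.commute)
  show "j < m \<Longrightarrow> i < m \<Longrightarrow> wm m ! (4*m+2+j*(2*m)+2*i) = LY (i+1) (m-(j+1))"
  proof -
    assume "j < m" "i < m"
    have e: "4*m+2+j*(2*m)+2*i = m*2+1+m*2+1+(j*(m*2) + (i*2+0))" by simp
    show ?thesis unfolding e g(5) using Ci[of 0 j i] \<open>j < m\<close> \<open>i < m\<close> by simp
  qed
  show "j < m \<Longrightarrow> i < m \<Longrightarrow> wm m ! (4*m+3+j*(2*m)+2*i) = LY (i+1) (m-j)"
  proof -
    assume "j < m" "i < m"
    have e: "4*m+3+j*(2*m)+2*i = m*2+1+m*2+1+(j*(m*2) + (i*2+1))" by simp
    show ?thesis unfolding e g(5) using Ci[of 1 j i] \<open>j < m\<close> \<open>i < m\<close> by simp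
  qed
qed



lemma wm_decomp:
  assumes "p < length (wm m)"
  shows "(\<exists>i<m. p = 2*i \<or> p = 2*i+1) \<or> p = 2*m \<or> (\<exists>i<m. p = 2*m+1+2*i \<or> p = 2*m+2+2*i)
     \<or> p = 4*m+1 \<or> (\<exists>j<m. \<exists>i<m. p = 4*m+2+j*(2*m)+2*i \<or> p = 4*m+3+j*(2*m)+2*i)"
proof -
  have L: "p < 2*m*m + 4*m + 2" using assms len_wm by simp
  consider "p < 2*m" | "p = 2*m" | "2*m < p \<and> p < 4*m+1" | "p = 4*m+1" | "4*m+1 < p" by linarith
  then show ?thesis
  proof cases
    case 1
    have "p = 2*(p div 2) \<or> p = 2*(p div 2) + 1" by presburger
    moreover have "p div 2 < m" using 1 by linarith
    ultimately show ?thesis by blast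
  next
    case 2 then show ?thesis by blast
  next
    case 3
    define q where "q = p - (2*m+1)"
    have "q = 2*(q div 2) \<or> q = 2*(q div 2) + 1" by presburger
    moreover have "q div 2 < m" using 3 q_def by linarith
    moreover have "p = 2*m+1+q" using 3 q_def by simp
    ultimately show ?thesis by fastforce
  next
    case 4 then show ?thesis by blast
  next
    case 5
    define q where "q = p - (4*m+2)"
    have pq: "p = 4*m+2+q" using 5 q_def by simp
    have qm: "q < m*(2*m)" using L pq by (simp add: algebra_simps)
    then have m0: "m > 0" by (cases m) auto
    define j where "j = q div (2*m)"
    define r where "r = q mod (2*m)"
    have qj: "q = j*(2*m) + r" unfolding j_def r_def by (rule div_mult_mod_eq[symmetric])
    have jm: "j < m" unfolding j_def using qm by (simp add: less_mult_imp_div_less)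
    have rm: "r < 2*m" unfolding r_def using m0 by simp
    have "r = 2*(r div 2) \<or> r = 2*(r div 2) + 1" by presburger
    moreover have "r div 2 < m" using rm by linarith
    ultimately show ?thesis using pq qj jm by fastforce
  qed
qed



fun desc :: "nat \<Rightarrow> letter \<Rightarrow> nat \<Rightarrow> bool" where
  "desc m (LZ a) p = (\<exists>i<m. a = i+1 \<and> (p = 2*i \<or> p = 2*m+1+2*i))"
| "desc m (LT a) p = (\<exists>i<m. a = i+1 \<and> p = 2*i+1)"
| "desc m LX p = (p = 2*m \<or> p = 4*m+1)"
| "desc m (LY a k) p = (\<exists>i<m. a = i+1 \<and> ((k = m \<and> p = 2*m+2+2*i) \<or>
      (\<exists>j<m. k = m-(j+1) \<and> p = 4*m+2+j*(2*m)+2*i) \<or> (\<exists>j<m. k = m-j \<and> p = 4*m+3+j*(2*m)+2*i)))"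
| "desc m (LOther a) p = False"

lemma wm_desc:
  assumes "p < length (wm m)"
  shows "desc m (wm m ! p) p"
  using wm_decomp[OF assms]
  apply (elim disjE exE conjE)
  subgoal premises h for i using wm_nth(1)[OF h(1)] h by auto
  subgoal premises h for i using wm_nth(2)[OF h(1)] h by auto
  subgoal premises h using wm_nth(3) h by auto
  subgoal premises h for i using wm_nth(4)[OF h(1)] h by auto
  subgoal premises h for i using wm_nth(5)[OF h(1)] h by auto
  subgoal premises h using wm_nth(6) h by auto
  subgoal premises h for j i using wm_nth(7)[OF h(1,2)] h by auto
  subgoal premises h for j i using wm_nth(8)[OF h(1,2)] h by auto
  done

lemma diff_eq_nat: "(m::nat) - a = m - b \<Longrightarrow> a \<le> m \<Longrightarrow> b \<le> m \<Longrightarrow> a = b"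
  by arith

lemma desc_char:
  assumes "desc m l p" "desc m l q" "p < q"
  shows "q = p + 2*m + 1 \<and> even p"
proof (cases l)
  case (LZ a) then show ?thesis using assms by auto
next
  case (LT a) then show ?thesis using assms by auto
next
  case LX then show ?thesis using assms by auto
next
  case (LOther a) then show ?thesis using assms by auto
next
  case (LY a k)
  from assms(1) obtain i where i: "i < m" "a = i+1" and
    p: "(k = m \<and> p = 2*m+2+2*i) \<or>
      (\<exists>j<m. k = m-(j+1) \<and> p = 4*m+2+j*(2*m)+2*i) \<or> (\<exists>j<m. k = m-j \<and> p = 4*m+3+j*(2*m)+2*i)"
    using LY by auto
  from assms(2) obtain i' where i': "i' < m" "a = i'+1" and
    q: "(k = m \<and> q = 2*m+2+2*i') \<or>
      (\<exists>j<m. k = m-(j+1) \<and> q = 4*m+2+j*(2*m)+2*i') \<or> (\<exists>j<m. k = m-j \<and> q = 4*m+3+j*(2*m)+2*i')"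
    using LY by auto
  have ii: "i' = i" using i i' by simp
  show ?thesis
    using p q
  proof (elim disjE exE conjE)
  qed (use assms(3) ii in \<open>auto simp: algebra_simps dest!: diff_eq_nat\<close>)
qed
lemma wm_char:
  assumes "i < j" "j < length (wm m)" "wm m ! i = wm m ! j"
  shows "j = i + 2*m + 1 \<and> even i"
  using desc_char[OF _ _ assms(1)] wm_desc[of i m] wm_desc[OF assms(2)] assms by simp


lemma jbound:
  assumes "4*n+2+j*(2*n)+2*i < 2*n*n+2*n+(2::nat)" 
  shows "j + 1 < n"
proof (rule ccontr)
  assume "\<not> j + 1 < n"
  then have "n - 1 \<le> j" by simp
  then have "(n-1)*(2*n) \<le> j*(2*n)" by (rule mult_le_mono1)
  moreover have "(n-1)*(2*n) + 2*n = n*(2*n)" by (cases n) auto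
  ultimately have "2*n*n \<le> j*(2*n) + 2*n" by (simp add: algebra_simps)
  then show False using assms by linarith
qed

lemma wn_partner:
  assumes "2*n+1 \<le> k" "k < 2*n*n+2*n+2"
  shows "(odd k \<longrightarrow> wm n ! (k-(2*n+1)) = wm n ! k) \<and>
         (even k \<longrightarrow> k+2*n+1 < length (wm n) \<and> wm n ! (k+2*n+1) = wm n ! k)"
proof -
  have kl: "k < length (wm n)" using assms len_wm[of n] by simp
  have lt: "k+2*n+1 < length (wm n)" if "even k"
  proof -
    have "odd (2*n*n+2*n+1)" by simp
    then have "k \<noteq> 2*n*n+2*n+1" using that by metis
    then show ?thesis using assms len_wm[of n] by simp
  qed
  show ?thesis
  using wm_decomp[OF kl]
  proof (elim disjE exE conjE)
    fix i assume "i < n" "k = 2*i" then show ?thesis using assms by simp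
  next
    fix i assume "i < n" "k = 2*i+1" then show ?thesis using assms by simp
  next
    assume "k = 2*n" then show ?thesis using assms by simp
  next
    fix i assume h: "i < n" "k = 2*n+1+2*i"
    have "k - (2*n+1) = 2*i" using h by simp
    then show ?thesis using h wm_nth(1)[OF h(1)] wm_nth(4)[OF h(1)] by simp
  next
    fix i assume h: "i < n" "k = 2*n+2+2*i"
    have e: "k+2*n+1 = 4*n+3+0*(2*n)+2*i" using h by simp
    have n0: "0 < n" using h by simp
    have ev: "even k" using h by simp
    show ?thesis using h wm_nth(5)[OF h(1)] wm_nth(8)[OF n0 h(1)] lt[OF ev] unfolding e
      by simp
  next
    assume h: "k = 4*n+1"
    then show ?thesis using wm_nth(3,6) by simp
  next
    fix j i assume h: "j < n" "i < n" "k = 4*n+2+j*(2*n)+2*i"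
    have j1: "j+1 < n" using jbound assms h by blast
    have e: "k+2*n+1 = 4*n+3+(j+1)*(2*n)+2*i" using h by (simp add: algebra_simps)
    have ev: "even k" using h by simp
    show ?thesis using h wm_nth(7)[OF h(1,2)] wm_nth(8)[OF j1 h(2)] lt[OF ev] unfolding e by simp
  next
    fix j i assume h: "j < n" "i < n" "k = 4*n+3+j*(2*n)+2*i"
    show ?thesis
    proof (cases j)
      case 0
      have e: "k-(2*n+1) = 2*n+2+2*i" using h 0 by simp
      show ?thesis using h wm_nth(5)[OF h(2)] wm_nth(8)[OF h(1,2)] 0 unfolding e by simp
    next
      case (Suc j')
      have j': "j' < n" using h Suc by simp
      have e: "k-(2*n+1) = 4*n+2+j'*(2*n)+2*i" using h Suc by (simp add: algebra_simps)
      have o: "odd k" using h by simp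
      show ?thesis using h wm_nth(7)[OF j' h(2)] wm_nth(8)[OF h(1,2)] Suc o unfolding e by simp
    qed
  qed
qed



definition Apos :: "word \<Rightarrow> (letter \<Rightarrow> word) \<Rightarrow> word \<Rightarrow> nat \<Rightarrow> nat" where
  "Apos pre f w k = length pre + length (concat (map f (take k w)))"

lemma Apos_Suc: "k < length w \<Longrightarrow> Apos pre f w (Suc k) = Apos pre f w k + length (f (w!k))"
  unfolding Apos_def by (simp add: take_Suc_conv_app_nth)

lemma Apos_nth:
  assumes "v = pre @ concat (map f w) @ suf" "k < length w" "r < length (f (w!k))"
  shows "v ! (Apos pre f w k + r) = f (w!k) ! r"
proof -
  have w: "w = take k w @ [w!k] @ drop (Suc k) w" using assms(2)
    by (metis append_Cons append_Nil id_take_nth_drop)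
  have "concat (map f w) = concat (map f (take k w)) @ f (w!k) @ concat (map f (drop (Suc k) w))"
    by (subst w) simp
  then show ?thesis using assms unfolding Apos_def by (simp add: nth_append)
qed

lemma Apos_end: "v = pre @ concat (map f w) @ suf \<Longrightarrow> Apos pre f w (length w) + length suf = length v"
  unfolding Apos_def by simp

lemma Apos_mono: "k1 \<le> k2 \<Longrightarrow> k2 \<le> length w \<Longrightarrow> Apos pre f w k1 \<le> Apos pre f w k2"
proof (induction k2)
  case 0 then show ?case by simp
next
  case (Suc k2)
  show ?case
  proof (cases "k1 = Suc k2")
    case False
    then have "Apos pre f w k1 \<le> Apos pre f w k2" using Suc by simp
    then show ?thesis using Apos_Suc[of k2 w pre f] Suc by simp
  qed simp
qed

lemma Apos_cover:
  assumes "k1 \<le> k2" "k2 \<le> length w" "Apos pre f w k1 \<le> p" "p < Apos pre f w k2"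
  shows "\<exists>k. k1 \<le> k \<and> k < k2 \<and> Apos pre f w k \<le> p \<and> p < Apos pre f w k + length (f (w!k))"
  using assms
proof (induction k2)
  case 0 then show ?case by simp
next
  case (Suc k2)
  show ?case
  proof (cases "p < Apos pre f w k2")
    case True
    then have "k1 \<noteq> Suc k2" using Suc by auto
    then show ?thesis using Suc True by (metis le_SucE less_SucI Suc_leD)
  next
    case False
    then have "k1 \<le> k2" using Suc by (metis le_SucE not_less)
    then show ?thesis using False Suc Apos_Suc[of k2 w pre f] by (intro exI[of _ k2]) auto
  qed
qed

lemma Apos_lin:
  assumes "k1 \<le> k2" "k2 \<le> length w" "\<And>k. k1 \<le> k \<Longrightarrow> k < k2 \<Longrightarrow> length (f (w!k)) \<le> 1"
  shows "Apos pre f w k2 \<le> Apos pre f w k1 + (k2 - k1)"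
  using assms
proof (induction k2)
  case 0 then show ?case by simp
next
  case (Suc k2)
  show ?case
  proof (cases "k1 = Suc k2")
    case False
    then have "Apos pre f w k2 \<le> Apos pre f w k1 + (k2 - k1)" using Suc by simp
    moreover have "length (f (w!k2)) \<le> 1" using Suc False by simp
    moreover have "k1 \<le> k2" using Suc False by simp
    ultimately show ?thesis using Apos_Suc[of k2 w pre f] Suc(3) by simp
  qed simp
qed

lemma partner:
  assumes v: "wm m = pre @ concat (map f w) @ suf"
    and kk: "k < k'" "k' < length w" and eq: "w!k = w!k'" and L: "length (f (w!k)) \<ge> 1"
  shows "length (f (w!k)) = 1 \<and> Apos pre f w k' = Apos pre f w k + 2*m + 1 \<and> even (Apos pre f w k)"
proof -
  let ?A = "Apos pre f w"
  have k: "k < length w" using kk by simp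
  have "?A (Suc k) \<le> ?A k'" using kk by (intro Apos_mono) auto
  then have lt: "?A k < ?A k'" using Apos_Suc[OF k, of pre f] L by simp
  have "?A k' + length (f (w!k')) = ?A (Suc k')" using Apos_Suc[OF kk(2)] by simp
  also have "\<dots> \<le> ?A (length w)" using kk by (intro Apos_mono) auto
  finally have bnd: "?A k' + length (f (w!k)) \<le> length (wm m)" using Apos_end[OF v] eq by simp
  have e0: "wm m ! (?A k) = wm m ! (?A k')"
  proof -
    have "f (w!k') \<noteq> []" using L eq by (cases "f (w!k')") auto
    then have ne: "f (w!k') \<noteq> []" by auto
    show ?thesis using Apos_nth[OF v k, of 0] Apos_nth[OF v kk(2), of 0] eq ne by simp
  qed
  have c: "?A k' = ?A k + 2*m + 1 \<and> even (?A k)"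
    using wm_char[OF lt _ e0] bnd L by simp
  have "length (f (w!k)) = 1"
  proof (rule ccontr)
    assume "length (f (w!k)) \<noteq> 1"
    then have L2: "length (f (w!k)) \<ge> 2" using L by simp
    have e1: "wm m ! (?A k + 1) = wm m ! (?A k' + 1)"
      using Apos_nth[OF v k, of 1] Apos_nth[OF v kk(2), of 1] L2 eq by simp
    have "?A k' + 1 = ?A k + 1 + 2*m + 1 \<and> even (?A k + 1)"
      using wm_char[OF _ _ e1] lt bnd L2 by simp
    then show False using c by simp
  qed
  then show ?thesis using c by simp
qed



lemma main_B:
  assumes v: "wm m = pre @ concat (map f (wm n)) @ suf"
    and fx: "f LX \<noteq> []" and m1: "m \<ge> 1"
  shows "m = n"
proof -
  define w where "w = wm n"
  define A where "A = Apos pre f w"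
  define L where "L = (\<lambda>k. length (f (w!k)))"
  have v': "wm m = pre @ concat (map f w) @ suf" using v w_def by simp
  have lw: "length w = 2*n*n+4*n+2" using len_wm w_def by simp
  have lv: "A (length w) \<le> 2*m*m+4*m+2" using Apos_end[OF v'] len_wm[of m] A_def by simp
  have AS: "\<And>k. k < length w \<Longrightarrow> A (Suc k) = A k + L k" using Apos_Suc A_def L_def by simp
  have PL: "\<And>k k'. k < k' \<Longrightarrow> k' < length w \<Longrightarrow> w!k = w!k' \<Longrightarrow> L k \<ge> 1 \<Longrightarrow>
      L k = 1 \<and> A k' = A k + 2*m + 1 \<and> even (A k)"
    using partner[OF v'] A_def L_def by simp
  have cover: "\<And>k1 k2 p. k1 \<le> k2 \<Longrightarrow> k2 \<le> length w \<Longrightarrow> A k1 \<le> p \<Longrightarrow> p < A k2 \<Longrightarrow>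
      \<exists>k. k1 \<le> k \<and> k < k2 \<and> A k \<le> p \<and> p < A k + L k"
    using Apos_cover A_def L_def by metis
  have mono: "\<And>k1 k2. k1 \<le> k2 \<Longrightarrow> k2 \<le> length w \<Longrightarrow> A k1 \<le> A k2"
    using Apos_mono A_def by metis
  have wx: "w!(2*n) = LX" "w!(4*n+1) = LX" using wm_nth(3,6) w_def by auto
  have L2n: "L (2*n) \<ge> 1" using fx wx L_def by (cases "f LX") auto
  have S1: "L (2*n) = 1 \<and> A (4*n+1) = A (2*n) + 2*m + 1 \<and> even (A (2*n))"
    using PL[of "2*n" "4*n+1"] L2n wx lw by simp
  have L4n: "L (4*n+1) = 1" using S1 wx L_def by simp
  have S2: "L k = 1 \<and> (odd k \<longrightarrow> odd (A k) \<and> A k \<ge> 2*m+1) \<and> (even k \<longrightarrow> even (A k))"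
    if k: "2*n+1 \<le> k" "k < 2*n*n+2*n+2" "L k \<ge> 1" for k
  proof (cases "even k")
    case True
    then have p: "k+2*n+1 < length w" "w!(k+2*n+1) = w!k" using wn_partner[OF k(1,2)] w_def by auto
    then show ?thesis using PL[of k "k+2*n+1"] k True by simp
  next
    case False
    then have p: "w!(k-(2*n+1)) = w!k" using wn_partner[OF k(1,2)] w_def by auto
    have "L (k-(2*n+1)) \<ge> 1" using p k L_def by simp
    moreover have "k < length w" using k lw by simp
    ultimately have "L (k-(2*n+1)) = 1 \<and> A k = A (k-(2*n+1)) + 2*m + 1 \<and> even (A (k-(2*n+1)))"
      using PL[of "k-(2*n+1)" k] p k by simp
    then show ?thesis using False p L_def by simp
  qed
  have nn: "n \<le> n*n" by (simp add: le_square)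
  have mn: "m \<le> n"
  proof -
    have "A (4*n+1) \<le> A (2*n+1) + ((4*n+1) - (2*n+1))"
      unfolding A_def
    proof (rule Apos_lin)
      show "4*n+1 \<le> length w" using lw by simp
      fix k assume "2*n+1 \<le> k" "k < 4*n+1"
      then show "length (f (w!k)) \<le> 1" using S2[of k] nn L_def by fastforce
    qed simp
    moreover have "A (2*n+1) = A (2*n) + 1" using AS[of "2*n"] S1 lw by simp
    ultimately show ?thesis using S1 by simp
  qed
  have A2: "A (2*n) \<ge> 2"
  proof -
    have "A (2*n+1) = A (2*n) + 1" using AS[of "2*n"] S1 lw by simp
    then obtain k where k: "2*n+1 \<le> k" "k < 4*n+1" "A k \<le> A (2*n) + 1" "A (2*n) + 1 < A k + L k"
      using cover[of "2*n+1" "4*n+1" "A (2*n) + 1"] S1 m1 lw by auto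
    have "L k \<ge> 1" using k by simp
    then have s: "L k = 1 \<and> (odd k \<longrightarrow> odd (A k) \<and> A k \<ge> 2*m+1) \<and> (even k \<longrightarrow> even (A k))"
      using S2[of k] k nn by simp
    then have Ak: "A k = A (2*n) + 1" using k by simp
    then have "odd k" using s S1 by auto
    then show ?thesis using s Ak m1 by simp
  qed
  have claim: "\<exists>k. k < 4*n+2+2*n*j \<and> k < length w \<and> L k = 1 \<and> A k = A (2*n) + j*(2*m) + 2*m + 1"
    if "j \<le> n" for j
    using that
  proof (induction j)
    case 0
    show ?case using S1 L4n lw by (intro exI[of _ "4*n+1"]) simp
  next
    case (Suc j)
    then obtain kj where kj: "kj < 4*n+2+2*n*j" "kj < length w" "L kj = 1"
      "A kj = A (2*n) + j*(2*m) + 2*m + 1" by auto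
    define p where "p = A (2*n) + j*(2*m) + 2*m"
    have A2n1: "A (2*n+1) = A (2*n) + 1" using AS[of "2*n"] S1 lw by simp
    have pge: "A (2*n+1) \<le> p" using A2n1 m1 p_def by simp
    have plt: "p < A kj" using kj p_def by simp
    have kj1: "2*n+1 \<le> kj"
    proof (rule ccontr)
      assume "\<not> 2*n+1 \<le> kj"
      then have "A kj \<le> A (2*n+1)" using mono[of kj "2*n+1"] lw by simp
      then show False using pge plt by simp
    qed
    obtain k' where k': "2*n+1 \<le> k'" "k' < kj" "A k' \<le> p" "p < A k' + L k'"
      using cover[OF kj1 _ pge plt] kj by auto
    have "2*n*j + 2*n \<le> 2*n*n" using Suc.prems
      by (metis add.commute mult_Suc_right mult_le_mono2)
    then have kb: "k' < 2*n*n+2*n+2" using k' kj by simp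
    have "L k' \<ge> 1" using k' by simp
    then have s: "L k' = 1 \<and> (odd k' \<longrightarrow> odd (A k') \<and> A k' \<ge> 2*m+1) \<and> (even k' \<longrightarrow> even (A k'))"
      using S2[of k'] k' kb by simp
    then have Ak: "A k' = p" using k' by simp
    have evp: "even p" using S1 p_def by simp
    have ev: "even k'" using s Ak evp by auto
    have pp: "k'+2*n+1 < length w" "w!(k'+2*n+1) = w!k'"
      using wn_partner[OF k'(1) kb] ev w_def by auto
    have q: "L k' = 1 \<and> A (k'+2*n+1) = A k' + 2*m + 1"
      using PL[of k' "k'+2*n+1"] pp s by simp
    have "odd (4*n+1+2*n*j)" by simp
    then have "k' \<noteq> 4*n+1+2*n*j" using ev by metis
    then have "k'+2*n+1 < 4*n+2+2*n*Suc j" using k' kj by simp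
    then show ?case using q pp Ak p_def L_def
      by (intro exI[of _ "k'+2*n+1"]) (simp add: algebra_simps)
  qed
  obtain k where k: "k < length w" "L k = 1" "A k = A (2*n) + n*(2*m) + 2*m + 1"
    using claim[of n] by auto
  have "A k + L k \<le> A (length w)" using AS[OF k(1)] mono[of "Suc k" "length w"] k by simp
  then have ineq: "n*(2*m) + 2*m + 4 \<le> 2*m*m+4*m+2" using k A2 lv by simp
  have nm: "n \<le> m"
  proof (rule ccontr)
    assume "\<not> n \<le> m"
    then have "(m+1)*(2*m) \<le> n*(2*m)" by (intro mult_le_mono1) simp
    then show False using ineq by (simp add: algebra_simps)
  qed
  show ?thesis using mn nm by simp
qed



lemma subword_suffix: "is_subword W (p @ q) \<Longrightarrow> is_subword W q"
  unfolding is_subword_def by (metis append.assoc)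

lemma eval_char:
  "u \<noteq> [] \<Longrightarrow> rees_eval W \<sigma> u = (if (\<forall>a\<in>set u. \<sigma> a \<noteq> None) \<and> is_subword W (concat (map (\<lambda>a. the (\<sigma> a)) u))
     then Some (concat (map (\<lambda>a. the (\<sigma> a)) u)) else None)"
proof (induction u)
  case Nil then show ?case by simp
next
  case (Cons a u)
  show ?case
  proof (cases "u = []")
    case True
    then show ?thesis by (cases "\<sigma> a") auto
  next
    case False
    note IH = Cons.IH[OF False]
    show ?thesis
    proof (cases "\<sigma> a")
      case None then show ?thesis by simp
    next
      case (Some b)
      then show ?thesis using IH subword_suffix[of W b] by auto
    qed
  qed
qed

lemma concat_nils: "concat (map (\<lambda>x. []) xs) = []"
  by (induction xs) auto

lemma filter_LX: "filter (\<lambda>b. b = LX) (wm n) = [LX, LX]"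
  unfolding wm_def by (simp add: filter_concat comp_def concat_nils)

lemma LX_in: "LX \<in> set (wm n)"
  using filter_LX[of n] by (metis filter_is_subset list.set_intros(1) subsetD)

lemma concat_zero: "(\<forall>a\<in>set u. a \<noteq> LX \<longrightarrow> f a = []) \<Longrightarrow>
    concat (map f u) = concat (map f (filter (\<lambda>b. b = LX) u))"
  by (induction u) auto

lemma concat_del: "f LX = [] \<Longrightarrow> concat (map f (del LX u)) = concat (map f u)"
  unfolding del_def by (induction u) auto

lemma len_split: "length (concat (map f u)) =
   length (concat (map f (filter (\<lambda>b. b = LX) u))) + length (concat (map f (del LX u)))"
  unfolding del_def by (induction u) auto

lemma set_del: "set (del LX u) = set u - {LX}"
  unfolding del_def by auto

lemma case_B0:
  assumes v: "wm 0 = pre @ concat (map f (wm n)) @ suf" and fx: "f LX \<noteq> []"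
  shows "\<forall>a\<in>set (del LX (wm n)). f a = []"
proof -
  have "length (concat (map f (wm n))) \<le> 2" using arg_cong[OF v, of length] len_wm[of 0] by simp
  then have "2 * length (f LX) + length (concat (map f (del LX (wm n)))) \<le> 2"
    using len_split[of f "wm n"] filter_LX[of n] by simp
  moreover have "length (f LX) \<ge> 1" using fx by (cases "f LX") auto
  ultimately have "length (concat (map f (del LX (wm n)))) = 0" by linarith
  then have "concat (map f (del LX (wm n))) = []" by blast
  then show ?thesis by simp
qed

lemma square:
  assumes v: "wm m = pre @ (a @ a @ r) @ suf" and a: "a \<noteq> []"
  shows "m = 0 \<and> r = []"
proof -
  let ?s = "length pre"
  have lv: "?s + 2*length a + length r \<le> length (wm m)" using v by simp
  have e0: "wm m ! ?s = wm m ! (?s + length a)" using v a by (simp add: nth_append)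
  have lt1: "?s < ?s + length a" using a by simp
  have lt2: "?s + length a < length (wm m)" using a lv by (cases a) auto
  have c: "?s + length a = ?s + 2*m + 1 \<and> even ?s"
    by (rule wm_char[OF lt1 lt2 e0])
  have l1: "length a = 1"
  proof (rule ccontr)
    assume "length a \<noteq> 1"
    moreover have "length a > 0" using a by simp
    ultimately have l2: "length a \<ge> 2" by linarith
    have e1: "wm m ! (?s+1) = wm m ! (?s + 1 + length a)" using v l2 by (simp add: nth_append)
    have lt3: "?s + 1 + length a < length (wm m)" using l2 lv by simp
    have "even (?s+1)" using wm_char[OF _ lt3 e1] l2 a by simp
    then show False using c by simp
  qed
  then have "m = 0" using c by simp
  then show ?thesis using lv len_wm[of 0] l1 by simp
qed



theorem lemma3:
  fixes N :: "nat set" and n :: nat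
  assumes "n \<notin> N"
  shows "satisfies (WN N) (wm n) (LX # LX # del LX (wm n))"
  unfolding satisfies_def
proof (intro allI impI)
  fix \<sigma> :: "letter \<Rightarrow> word option"
  define f where "f = (\<lambda>a. the (\<sigma> a))"
  define W where "W = WN N"
  define u1 where "u1 = wm n"
  define u2 where "u2 = LX # LX # del LX u1"
  have ne1: "u1 \<noteq> []" using LX_in[of n] u1_def by auto
  have ne2: "u2 \<noteq> []" using u2_def by simp
  have set12: "set u2 = set u1" using LX_in[of n] u1_def u2_def set_del by auto
  have c2: "concat (map f u2) = f LX @ f LX @ concat (map f (del LX u1))" using u2_def by simp
  have ev1: "rees_eval W \<sigma> u1 = (if (\<forall>a\<in>set u1. \<sigma> a \<noteq> None) \<and> is_subword W (concat (map f u1))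
     then Some (concat (map f u1)) else None)" using eval_char[OF ne1] f_def by simp
  have ev2: "rees_eval W \<sigma> u2 = (if (\<forall>a\<in>set u1. \<sigma> a \<noteq> None) \<and> is_subword W (concat (map f u2))
     then Some (concat (map f u2)) else None)" using eval_char[OF ne2] f_def set12 by simp
  have K: "\<forall>a\<in>set (del LX u1). f a = []"
    if fx: "f LX \<noteq> []" and sub: "is_subword W (concat (map f u1)) \<or> is_subword W (concat (map f u2))"
  proof -
    from sub show ?thesis
    proof
      assume "is_subword W (concat (map f u1))"
      then obtain m p s where m: "m \<in> N" and v: "wm m = p @ concat (map f (wm n)) @ s"
        unfolding is_subword_def W_def WN_def u1_def by auto
      have "m \<noteq> n" using m assms by auto
      show ?thesis
      proof (cases "m = 0")
        case True
        then show ?thesis using case_B0[of p f n s] v fx u1_def by simp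
      next
        case False
        then have "m = n" using main_B[OF v fx] by simp
        then show ?thesis using \<open>m \<noteq> n\<close> by simp
      qed
    next
      assume "is_subword W (concat (map f u2))"
      then obtain m p s where v: "wm m = p @ (f LX @ f LX @ concat (map f (del LX u1))) @ s"
        unfolding is_subword_def W_def WN_def c2 by auto
      have "concat (map f (del LX u1)) = []" using square[OF v fx] by simp
      then show ?thesis by simp
    qed
  qed
  show "rees_eval (WN N) \<sigma> (wm n) = rees_eval (WN N) \<sigma> (LX # LX # del LX (wm n))"
  proof -
    have goal: "rees_eval W \<sigma> u1 = rees_eval W \<sigma> u2"
    proof (cases "f LX = []")
      case True
      then have "concat (map f u2) = concat (map f u1)" using c2 concat_del by simp
      then show ?thesis using ev1 ev2 by simp
    next
      case False
      show ?thesis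
      proof (cases "is_subword W (concat (map f u1)) \<or> is_subword W (concat (map f u2))")
        case True
        then have z: "\<forall>a\<in>set (del LX u1). f a = []" using K False by blast
        then have "\<forall>a\<in>set u1. a \<noteq> LX \<longrightarrow> f a = []" using set_del by auto
        then have "concat (map f u1) = f LX @ f LX"
          using concat_zero[of u1 f] filter_LX[of n] u1_def by simp
        moreover have "concat (map f (del LX u1)) = []" using z by simp
        ultimately have "concat (map f u1) = concat (map f u2)" using c2 by simp
        then show ?thesis using ev1 ev2 by simp
      next
        case False
        then show ?thesis using ev1 ev2 by simp
      qed
    qed
    then show ?thesis using W_def u1_def u2_def by simp
  qed
qed

end
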